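(* Let $\dot x = f(x,u) = g(x)+h(x)u$ and assume there exists a Lyapunov function $V$ such that under the policy $\mu(x)$ the state is asymptotically stable, i.e. $\dot V(x)<0$ for all $x\in\mathcal{B} = \{x\in\mathbb{R}^n : \Vert x\Vert < r\}$, $r>0$. Consider the trajectory $x(t)$ starting at $x(0)$ that applies $\mu(x(t))$ except on $[\tau,\tau+\lambda]$, where it applies $\mu_\star(t) = -R^{-1}h(x(t))^\top\rho(t) + \mu(x(t))$, and let $t\ge\tau+\lambda$. Then $$V(x(t)) - V(x(t),\mu(x(t))) \le \lambda\beta,$$ where $V(x(t),\mu(x(t))) := V(x(0)) + \int_0^t \frac{\partial V}{\partial x}(x(s))\, f(x(s),\mu(x(s)))\,ds$ and $$\beta = \sup_{t\in[\tau,\tau+\lambda]} -\frac{\partial V}{\partial x}(x(t))\,h(x(t))R^{-1}h(x(t))^\top\rho(t).$$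
   Context: $x\in\mathbb{R}^n$, $u\in\mathbb{R}^m$, $g:\mathbb{R}^n\to\mathbb{R}^n$, $h:\mathbb{R}^n\to\mathbb{R}^{n\times m}$, $\mu:\mathbb{R}^n\to\mathbb{R}^m$ an equilibrium policy, $R\in\mathbb{R}^{m\times m}$ positive definite, $\tau$ a switching time and $\lambda\ge 0$ a switching duration. $\rho$ is the adjoint solving $\dot\rho = -\left(\frac{\partial \ell}{\partial x} + \frac{\partial \mu}{\partial x}^\top\frac{\partial \ell}{\partial u} - \frac{\eta}{T_r}\sum_{i=1}^N \frac{p(s_i)}{q(s_i)}\left(\frac{\partial \gamma_i}{\partial x} + \frac{\partial \mu}{\partial x}^\top \frac{\partial \gamma_i}{\partial u}\right)\right) - \left(\frac{\partial f}{\partial x} + \frac{\partial f}{\partial u}\frac{\partial \mu}{\partial x}\right)^\top \rho$ with $\rho(t_i+T)=\frac{\partial m}{\partial x}(x(t_i+T))$ along the nominal trajectory under $\mu$ on a horizon $[t_i,t_i+T]$, where $\ell$ is a running cost, $m$ a terminal cost, $s_1,\dots,s_N$ uniform samples from a search domain $\mathcal{X}^v\subset\mathbb{R}^{n+m}$, $p$ a target density, $q(s)=\frac{\eta}{T_r}\int_{t_i-t_r}^{t_i+T}\exp[-\tfrac12(s-x_v(t))^\top\Sigma^{-1}(s-x_v(t))]dt$ with $x_v$ the part of the state–action pair in $\mathcal{X}^v$, $\Sigma$ positive definite, $\eta$ normalizing, $T_r=T+t_r$, and $\gamma_i=\exp[-\tfrac12(s_i-x_v)^\top\Sigma^{-1}(s_i-x_v)]$.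 *)

theory Defs
  imports "HOL-Analysis.Analysis"
begin

definition ctrl_aff ::
  "(real^'n \<Rightarrow> real^'n) \<Rightarrow> (real^'n \<Rightarrow> real^'m^'n) \<Rightarrow> real^'n \<Rightarrow> real^'m \<Rightarrow> real^'n"
  where "ctrl_aff g h x u = g x + h x *v u"

definition pos_def_mat :: "real^'m^'m \<Rightarrow> bool"
  where "pos_def_mat R \<longleftrightarrow> transpose R = R \<and> (\<forall>v. v \<noteq> 0 \<longrightarrow> v \<bullet> (R *v v) > 0)"

definition mu_star ::
  "(real^'n \<Rightarrow> real^'m^'n) \<Rightarrow> real^'m^'m \<Rightarrow> (real \<Rightarrow> real^'n) \<Rightarrow> (real^'n \<Rightarrow> real^'m)
   \<Rightarrow> (real \<Rightarrow> real^'n) \<Rightarrow> real \<Rightarrow> real^'m"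
  where "mu_star h R rho \<mu> x t =
     - (matrix_inv R *v (transpose (h (x t)) *v rho t)) + \<mu> (x t)"

definition switched_input ::
  "(real^'n \<Rightarrow> real^'m^'n) \<Rightarrow> real^'m^'m \<Rightarrow> (real \<Rightarrow> real^'n) \<Rightarrow> (real^'n \<Rightarrow> real^'m)
   \<Rightarrow> real \<Rightarrow> real \<Rightarrow> (real \<Rightarrow> real^'n) \<Rightarrow> real \<Rightarrow> real^'m"
  where "switched_input h R rho \<mu> \<tau> lam x t =
     (if t \<in> {\<tau>..\<tau>+lam} then mu_star h R rho \<mu> x t else \<mu> (x t))"

end

theory Submission
  imports Defs
begin

lemma mvneg: "(A::real^'m^'n) *v (- v) = - (A *v v)"
  by (simp add: matrix_vector_mult_def vec_eq_iff sum_negf)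

lemma mvdiff: "(A::real^'m^'n) *v (u - v) = A *v u - A *v v"
  by (simp add: matrix_vector_mult_def vec_eq_iff sum_subtractf algebra_simps)

lemma cont_mv:
  assumes "continuous_on S A" "continuous_on S v"
  shows "continuous_on S (\<lambda>s. (A s::real^'m^'n) *v v s)"
  unfolding matrix_vector_mult_def
  by (intro continuous_intros assms)

lemma cont_vm:
  assumes "continuous_on S A" "continuous_on S v"
  shows "continuous_on S (\<lambda>s. v s v* (A s::real^'m^'n))"
  unfolding vector_matrix_mult_def
  by (intro continuous_intros assms)

lemma cont_tr:
  assumes "continuous_on S A"
  shows "continuous_on S (\<lambda>s. transpose (A s::real^'m^'n))"
  unfolding transpose_def
  by (intro continuous_intros assms)

theorem theorem1:
  fixes g :: "real^'n \<Rightarrow> real^'n" and h :: "real^'n \<Rightarrow> real^'m^'n"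
    and \<mu> :: "real^'n \<Rightarrow> real^'m" and R :: "real^'m^'m"
    and V :: "real^'n \<Rightarrow> real" and DV :: "real^'n \<Rightarrow> real^'n"
    and \<rho> :: "real \<Rightarrow> real^'n" and x :: "real \<Rightarrow> real^'n"
    and r \<tau> lam t :: real
  assumes cont_g: "continuous_on UNIV g"
    and cont_h: "continuous_on UNIV h"
    and cont_mu: "continuous_on UNIV \<mu>"
    and R_pd: "pos_def_mat R"
    and V_deriv: "\<And>y. (V has_derivative (\<lambda>v. DV y \<bullet> v)) (at y)"
    and cont_DV: "continuous_on UNIV DV"
    and r_pos: "r > 0"
    and lyap_zero: "V 0 = 0"
    and lyap_pos: "\<And>y. y \<noteq> 0 \<Longrightarrow> norm y < r \<Longrightarrow> V y > 0"
    and lyap_dec: "\<And>y. y \<noteq> 0 \<Longrightarrow> norm y < r \<Longrightarrow> DV y \<bullet> ctrl_aff g h y (\<mu> y) < 0"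
    and cont_rho: "continuous_on {\<tau>..\<tau>+lam} \<rho>"
    and tau_nonneg: "\<tau> \<ge> 0" and lam_nonneg: "lam \<ge> 0"
    and t_ge: "t \<ge> \<tau> + lam"
    and x_cont: "continuous_on {0..t} x"
    and x_ode: "\<And>s. s \<in> {0..t} - {\<tau>, \<tau>+lam} \<Longrightarrow>
       (x has_vector_derivative
          ctrl_aff g h (x s) (switched_input h R \<rho> \<mu> \<tau> lam x s)) (at s within {0..t})"
  shows "V (x t) - (V (x 0) + integral {0..t} (\<lambda>s. DV (x s) \<bullet> ctrl_aff g h (x s) (\<mu> (x s))))
         \<le> lam * (SUP s\<in>{\<tau>..\<tau>+lam}.
               - (DV (x s) \<bullet> (h (x s) *v (matrix_inv R *v (transpose (h (x s)) *v \<rho> s)))))"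
proof -
  define F where "F s = DV (x s) \<bullet> ctrl_aff g h (x s) (switched_input h R \<rho> \<mu> \<tau> lam x s)" for s
  define G where "G s = DV (x s) \<bullet> ctrl_aff g h (x s) (\<mu> (x s))" for s
  define k where "k s = - (DV (x s) \<bullet> (h (x s) *v (matrix_inv R *v (transpose (h (x s)) *v \<rho> s))))" for s
  define E where "E s = (if s \<in> {\<tau>..\<tau>+lam} then k s else 0)" for s
  have FGE: "F s = G s + E s" for s
    by (simp add: F_def G_def E_def k_def switched_input_def mu_star_def ctrl_aff_def
        matrix_vector_right_distrib inner_add_right inner_minus_right mvneg mvdiff inner_diff_right
        del: atLeastAtMost_iff)
  have t0: "0 \<le> t" using tau_nonneg lam_nonneg t_ge by linarith
  have Vc: "continuous_on UNIV V"
    using V_deriv has_derivative_continuous continuous_at_imp_continuous_on by blast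
  have Vxc: "continuous_on {0..t} (V \<circ> x)"
    by (rule continuous_on_compose[OF x_cont continuous_on_subset[OF Vc]]) auto
  have "(F has_integral ((V \<circ> x) t - (V \<circ> x) 0)) {0..t}"
  proof (rule fundamental_theorem_of_calculus_interior_strong[of "{\<tau>, \<tau>+lam}"])
    fix s assume s: "s \<in> {0<..<t} - {\<tau>, \<tau>+lam}"
    then have "(x has_vector_derivative
          ctrl_aff g h (x s) (switched_input h R \<rho> \<mu> \<tau> lam x s)) (at s within {0..t})"
      by (intro x_ode) auto
    then have xd: "(x has_vector_derivative
          ctrl_aff g h (x s) (switched_input h R \<rho> \<mu> \<tau> lam x s)) (at s)"
      using s at_within_Icc_at[of 0 s t] by auto
    have "((V \<circ> x) has_derivative ((\<lambda>v. DV (x s) \<bullet> v) \<circ> (\<lambda>r. r *\<^sub>R ctrl_aff g h (x s) (switched_input h R \<rho> \<mu> \<tau> lam x s)))) (at s)"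
      using diff_chain_at[OF xd[unfolded has_vector_derivative_def] V_deriv] .
    then show "((V \<circ> x) has_vector_derivative F s) (at s)"
      unfolding has_vector_derivative_def F_def
      by (simp add: o_def mult.commute inner_scaleR_right)
  qed (use t0 Vxc in auto)
  then have Fint: "(F has_integral (V (x t) - V (x 0))) {0..t}" by simp
  have contk: "continuous_on {\<tau>..\<tau>+lam} k"
  proof -
    have xc: "continuous_on {\<tau>..\<tau>+lam} x"
      by (rule continuous_on_subset[OF x_cont]) (use t_ge tau_nonneg in auto)
    have "continuous_on {\<tau>..\<tau>+lam} (\<lambda>s. h (x s))"
      using continuous_on_compose[OF xc continuous_on_subset[OF cont_h]] by (auto simp: o_def)
    moreover have "continuous_on {\<tau>..\<tau>+lam} (\<lambda>s. DV (x s))"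
      using continuous_on_compose[OF xc continuous_on_subset[OF cont_DV]] by (auto simp: o_def)
    ultimately show ?thesis unfolding k_def
      by (intro continuous_intros cont_rho cont_mv cont_vm cont_tr) auto
  qed
  have contG: "continuous_on {0..t} G"
  proof -
    have "continuous_on {0..t} (\<lambda>s. h (x s))"
      using continuous_on_compose[OF x_cont continuous_on_subset[OF cont_h]] by (auto simp: o_def)
    moreover have "continuous_on {0..t} (\<lambda>s. DV (x s))"
      using continuous_on_compose[OF x_cont continuous_on_subset[OF cont_DV]] by (auto simp: o_def)
    moreover have "continuous_on {0..t} (\<lambda>s. g (x s))"
      using continuous_on_compose[OF x_cont continuous_on_subset[OF cont_g]] by (auto simp: o_def)
    moreover have "continuous_on {0..t} (\<lambda>s. \<mu> (x s))"
      using continuous_on_compose[OF x_cont continuous_on_subset[OF cont_mu]] by (auto simp: o_def)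
    ultimately show ?thesis unfolding G_def ctrl_aff_def
      by (intro continuous_intros cont_mv) auto
  qed
  have Gint: "(G has_integral integral {0..t} G) {0..t}"
    using integrable_continuous_interval[OF contG] by (simp add: integrable_integral)
  have "(E has_integral (V (x t) - V (x 0) - integral {0..t} G)) {0..t}"
  proof -
    have "E = (\<lambda>s. F s - G s)" using FGE by (auto simp: fun_eq_iff)
    then show ?thesis using has_integral_diff[OF Fint Gint] by simp
  qed
  then have kint: "(k has_integral (V (x t) - V (x 0) - integral {0..t} G)) {\<tau>..\<tau>+lam}"
    unfolding E_def using has_integral_restrict[of "{\<tau>..\<tau>+lam}" "{0..t}" k] tau_nonneg t_ge
    by auto
  define B where "B = (SUP s\<in>{\<tau>..\<tau>+lam}. k s)"
  have bdd: "bdd_above (k ` {\<tau>..\<tau>+lam})"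
    by (rule bounded_imp_bdd_above[OF compact_imp_bounded[OF compact_continuous_image[OF contk compact_Icc]]])
  have kle: "k s \<le> B" if "s \<in> {\<tau>..\<tau>+lam}" for s
    unfolding B_def using bdd that by (rule cSUP_upper2) auto
  have "V (x t) - V (x 0) - integral {0..t} G \<le> integral {\<tau>..\<tau>+lam} (\<lambda>_. B)"
    using has_integral_le[OF kint integrable_integral[OF integrable_const_ivl[of B]]] kle
    by fastforce
  also have "\<dots> = lam * B" using lam_nonneg by simp
  finally show ?thesis unfolding B_def k_def G_def by simp
qed

end
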